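(* Let $\alpha>0$ and $\kappa>0$ be given, and for $n\ge 0$ set $\rho_{\kappa n}=\max\bigl(\tfrac12,\,1-\tfrac{\kappa}{n+1}\bigr)$. Let $(\delta_{nj})_{n\ge 0,\,0\le j\le n}$ be a triangular family of real numbers with $\sup_{n,j}|\delta_{nj}|<\tfrac12$. For $n\ge 0$ and $|z|=1$ define $R_n(z)>0$ by \[ \Bigl|\prod_{j=0}^{n}\bigl(z-\rho_{\kappa n}e^{\frac{2\pi i (j+\alpha\delta_{nj})}{n+1}}\bigr)\Bigr| = R_n(z)\,\Bigl|\prod_{j=0}^{n}\bigl(z-\rho_{\kappa n}e^{\frac{2\pi i (j+\delta_{nj})}{n+1}}\bigr)\Bigr|^{\alpha}. \] Then there exist constants $0<c\le C<\infty$ such that $c\le R_n(z)\le C$ for all $z$ on the unit circle $\mathbb{T}$ and all $n\ge 0$. *)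

theory Defs
  imports Complex_Main
begin

definition rho :: "real \<Rightarrow> nat \<Rightarrow> real" where
  "rho \<kappa> n = max (1/2) (1 - \<kappa> / (real n + 1))"

definition Pnod :: "real \<Rightarrow> real \<Rightarrow> (nat \<Rightarrow> nat \<Rightarrow> real) \<Rightarrow> nat \<Rightarrow> complex \<Rightarrow> complex" where
  "Pnod \<kappa> a \<delta> n z =
     (\<Prod>j=0..n. z - complex_of_real (rho \<kappa> n) *
        exp (complex_of_real (2 * pi * (real j + a * \<delta> n j) / (real n + 1)) * \<i>))"

definition Rfun :: "real \<Rightarrow> real \<Rightarrow> (nat \<Rightarrow> nat \<Rightarrow> real) \<Rightarrow> nat \<Rightarrow> complex \<Rightarrow> real" where
  "Rfun \<alpha> \<kappa> \<delta> n z = cmod (Pnod \<kappa> \<alpha> \<delta> n z) / (cmod (Pnod \<kappa> 1 \<delta> n z) powr \<alpha>)"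

end

theory Submission
  imports Defs "HOL-Analysis.Analysis" "HOL-Computational_Algebra.Fundamental_Theorem_Algebra"
begin

definition DD :: "real \<Rightarrow> real \<Rightarrow> real" where
  "DD \<rho> w = 1 + \<rho>\<^sup>2 - 2 * \<rho> * cos w"

lemma DD_eq: "DD \<rho> w = (1 - \<rho>)\<^sup>2 + 4 * \<rho> * (sin (w/2))\<^sup>2"
proof -
  have c: "cos w = 1 - 2 * (sin (w/2))\<^sup>2" using cos_double_sin[of "w/2"] by simp
  show ?thesis unfolding DD_def c by (simp add: power2_eq_square algebra_simps)
qed

lemma DD_pos: "0 < \<rho> \<Longrightarrow> \<rho> < 1 \<Longrightarrow> DD \<rho> w \<ge> (1 - \<rho>)\<^sup>2"
  unfolding DD_eq by simp

lemma alg1: "(1 / d * (0 - (0 * c + - s * (0 - 1) * (2 * \<rho>))) * 2 - L * 0) / (2 * 2) = - \<rho> * s / d"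
  for d c s \<rho> L :: real
  by (simp add: field_simps)
lemma alg2: " - (((0 * s + c * (0 - 1) * \<rho>) * d - \<rho> * s * (0 - (0 * c + - s * (0 - 1) * (2 * \<rho>)))) / (d * d)) =
   (- \<rho> * - c * d - - \<rho> * s * - (2 * \<rho> * s)) / d\<^sup>2"
  for d c s \<rho> L :: real
  by (simp add: power2_eq_square field_simps) (metis minus_diff_eq minus_divide_left)

lemma DERIV_F1:
  assumes "0 < \<rho>" "\<rho> < 1"
  shows "((\<lambda>t. ln (DD \<rho> (v - t)) / 2) has_real_derivative (- \<rho> * sin (v - t) / DD \<rho> (v - t))) (at t)"
proof -
  have p: "DD \<rho> (v - t) > 0"
  proof -
    have "(1 - \<rho>)\<^sup>2 > 0" using assms by simp
    thus ?thesis using DD_pos[OF assms, of "v-t"] by linarith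
  qed
  have "((\<lambda>t. ln (1 + \<rho>\<^sup>2 - 2 * \<rho> * cos (v - t)) / 2) has_real_derivative 
     (- \<rho> * sin (v - t) / (1 + \<rho>\<^sup>2 - 2 * \<rho> * cos (v - t)))) (at t)"
    apply (rule DERIV_cong)
     apply (auto intro!: derivative_eq_intros)[1]
    using p unfolding DD_def apply simp by (rule alg1)
  thus ?thesis unfolding DD_def by (simp add: field_simps)
qed

lemma DERIV_F2:
  assumes "0 < \<rho>" "\<rho> < 1"
  shows "((\<lambda>t. - \<rho> * sin (v - t) / DD \<rho> (v - t)) has_real_derivative
     ((\<rho> * cos (v - t) * DD \<rho> (v - t) - 2 * \<rho>\<^sup>2 * (sin (v - t))\<^sup>2) / (DD \<rho> (v - t))\<^sup>2)) (at t)"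
proof -
  have p: "DD \<rho> (v - t) > 0"
  proof -
    have "(1 - \<rho>)\<^sup>2 > 0" using assms by simp
    thus ?thesis using DD_pos[OF assms, of "v-t"] by linarith
  qed
  have "((\<lambda>t. - \<rho> * sin (v - t) / (1 + \<rho>\<^sup>2 - 2 * \<rho> * cos (v - t))) has_real_derivative 
     ((- \<rho> * (- cos (v - t))) * (1 + \<rho>\<^sup>2 - 2 * \<rho> * cos (v - t)) - (- \<rho> * sin (v - t)) * (- (2 * \<rho> * (sin (v - t)))))
       / (1 + \<rho>\<^sup>2 - 2 * \<rho> * cos (v - t))\<^sup>2) (at t)"
    apply (rule DERIV_cong)
     apply (auto intro!: derivative_eq_intros)[1]
    using p unfolding DD_def apply simp by (rule alg2)
  thus ?thesis unfolding DD_def by (simp add: field_simps power2_eq_square)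
qed

lemma mvt_bound:
  fixes f f' :: "real \<Rightarrow> real"
  assumes d: "\<And>s. \<bar>s\<bar> \<le> \<bar>t\<bar> \<Longrightarrow> (f has_real_derivative f' s) (at s)"
    and b: "\<And>s. \<bar>s\<bar> \<le> \<bar>t\<bar> \<Longrightarrow> \<bar>f' s\<bar> \<le> B"
  shows "\<bar>f t - f 0\<bar> \<le> B * \<bar>t\<bar>"
proof (cases "t = 0")
  case True thus ?thesis by simp
next
  case False
  show ?thesis
  proof (cases "t > 0")
    case True
    then obtain z where z: "0 < z" "z < t" "f t - f 0 = (t - 0) * f' z"
      using MVT2[of 0 t f f'] d by force
    have "\<bar>f' z\<bar> \<le> B" using b z True by auto
    thus ?thesis using z True by (simp add: abs_mult mult.commute mult_left_mono)
  next
    case False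
    hence "t < 0" using \<open>t \<noteq> 0\<close> by simp
    then obtain z where z: "t < z" "z < 0" "f 0 - f t = (0 - t) * f' z"
      using MVT2[of t 0 f f'] d by force
    have "\<bar>f' z\<bar> \<le> B" using b z \<open>t < 0\<close> by auto
    hence "\<bar>f 0 - f t\<bar> \<le> B * \<bar>t\<bar>" using z \<open>t < 0\<close> by (simp add: abs_mult mult.commute mult_left_mono)
    thus ?thesis by simp
  qed
qed

lemma taylor2:
  fixes F F1 F2 :: "real \<Rightarrow> real"
  assumes d1: "\<And>t. (F has_real_derivative F1 t) (at t)"
    and d2: "\<And>t. (F1 has_real_derivative F2 t) (at t)"
    and bd: "\<And>t. \<bar>t\<bar> \<le> b \<Longrightarrow> \<bar>F2 t\<bar> \<le> K"
    and a: "\<bar>a\<bar> \<le> b"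
  shows "\<bar>F a - F 0 - a * F1 0\<bar> \<le> K * a\<^sup>2"
proof -
  have s1: "\<bar>F1 s - F1 0\<bar> \<le> K * \<bar>s\<bar>" if "\<bar>s\<bar> \<le> b" for s
    by (rule mvt_bound[OF d2]) (use bd that in auto)
  have dh: "((\<lambda>t. F t - t * F1 0) has_real_derivative (F1 s - F1 0)) (at s)" for s
    using d1[of s] by (auto intro!: derivative_eq_intros)
  have "\<bar>(F a - a * F1 0) - (F 0 - 0 * F1 0)\<bar> \<le> (K * \<bar>a\<bar>) * \<bar>a\<bar>"
  proof (rule mvt_bound[where f="\<lambda>t. F t - t * F1 0", OF dh])
    fix s assume s: "\<bar>s\<bar> \<le> \<bar>a\<bar>"
    have b0: "0 \<le> b" using a abs_ge_zero[of a] by linarith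
    have K0: "K \<ge> 0" using bd[of 0] b0 abs_ge_zero[of "F2 0"] by simp
    have "\<bar>F1 s - F1 0\<bar> \<le> K * \<bar>s\<bar>" using s1 s a by auto
    also have "\<dots> \<le> K * \<bar>a\<bar>" using K0 s by (simp add: mult_left_mono)
    finally show "\<bar>F1 s - F1 0\<bar> \<le> K * \<bar>a\<bar>" .
  qed
  thus ?thesis by (simp add: power2_eq_square mult.assoc algebra_simps)
qed

lemma F2_bound:
  assumes "0 < \<rho>" "\<rho> < 1"
  shows "\<bar>(\<rho> * cos w * DD \<rho> w - 2 * \<rho>\<^sup>2 * (sin w)\<^sup>2) / (DD \<rho> w)\<^sup>2\<bar> \<le> 3 / DD \<rho> w"
proof -
  have p: "DD \<rho> w > 0"
  proof -
    have "(1 - \<rho>)\<^sup>2 > 0" using assms by simp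
    thus ?thesis using DD_pos[OF assms, of w] by linarith
  qed
  have s2: "(sin w)\<^sup>2 \<le> 2 * (1 - cos w)"
  proof -
    have "(sin w)\<^sup>2 = (1 - cos w) * (1 + cos w)" by (simp add: sin_squared_eq power2_eq_square algebra_simps)
    moreover have "(1 - cos w) * (1 + cos w) \<le> (1 - cos w) * 2"
      using cos_le_one[of w] by (intro mult_left_mono) auto
    ultimately show ?thesis by simp
  qed
  have D2: "DD \<rho> w \<ge> 2 * \<rho> * (1 - cos w)"
  proof -
    have "DD \<rho> w = (1 - \<rho>)\<^sup>2 + 2 * \<rho> * (1 - cos w)" by (simp add: DD_def power2_eq_square algebra_simps)
    thus ?thesis using zero_le_power2[of "1 - \<rho>"] by linarith
  qed
  have rs: "\<rho> * (sin w)\<^sup>2 \<le> DD \<rho> w"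
  proof -
    have "\<rho> * (sin w)\<^sup>2 \<le> \<rho> * (2 * (1 - cos w))" using s2 assms by (intro mult_left_mono) auto
    moreover have "\<rho> * (2 * (1 - cos w)) = 2 * \<rho> * (1 - cos w)" by simp
    ultimately show ?thesis using D2 by linarith
  qed
  have "\<bar>\<rho> * cos w * DD \<rho> w - 2 * \<rho>\<^sup>2 * (sin w)\<^sup>2\<bar> \<le> \<rho> * DD \<rho> w + 2 * \<rho> * (\<rho> * (sin w)\<^sup>2)"
  proof -
    have "\<bar>\<rho> * cos w * DD \<rho> w\<bar> \<le> \<rho> * DD \<rho> w"
      using assms p abs_cos_le_one[of w] by (simp add: abs_mult mult_right_le_one_le)
    moreover have "\<bar>2 * \<rho>\<^sup>2 * (sin w)\<^sup>2\<bar> = 2 * \<rho> * (\<rho> * (sin w)\<^sup>2)"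
      using assms by (simp add: power2_eq_square)
    ultimately show ?thesis using abs_triangle_ineq4[of "\<rho> * cos w * DD \<rho> w" "2 * \<rho>\<^sup>2 * (sin w)\<^sup>2"] by linarith
  qed
  also have "\<dots> \<le> \<rho> * DD \<rho> w + 2 * \<rho> * DD \<rho> w" using rs assms by simp
  also have "\<dots> \<le> 3 * DD \<rho> w" using assms p by simp
  finally have "\<bar>\<rho> * cos w * DD \<rho> w - 2 * \<rho>\<^sup>2 * (sin w)\<^sup>2\<bar> / (DD \<rho> w)\<^sup>2 \<le> 3 * DD \<rho> w / (DD \<rho> w)\<^sup>2"
    using p by (simp add: divide_right_mono)
  thus ?thesis using p by (simp add: power2_eq_square abs_div)
qed

lemma E_bound:
  assumes r: "0 < \<rho>" "\<rho> < 1" and al: "\<alpha> > 0" and L: "L > 0"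
    and DL: "\<And>t. \<bar>t\<bar> \<le> max \<alpha> 1 * \<bar>s\<bar> \<Longrightarrow> DD \<rho> (v - t) \<ge> L"
  shows "\<bar>ln (DD \<rho> (v - \<alpha> * s)) / 2 - \<alpha> * (ln (DD \<rho> (v - s)) / 2) - (1 - \<alpha>) * (ln (DD \<rho> (v - 0)) / 2)\<bar>
     \<le> 3 * (\<alpha>\<^sup>2 + \<alpha>) * s\<^sup>2 / L"
proof -
  define F where "F = (\<lambda>t. ln (DD \<rho> (v - t)) / 2)"
  define F1 where "F1 = (\<lambda>t. - \<rho> * sin (v - t) / DD \<rho> (v - t))"
  define F2 where "F2 = (\<lambda>t. (\<rho> * cos (v - t) * DD \<rho> (v - t) - 2 * \<rho>\<^sup>2 * (sin (v - t))\<^sup>2) / (DD \<rho> (v - t))\<^sup>2)"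
  have d1: "\<And>t. (F has_real_derivative F1 t) (at t)" unfolding F_def F1_def by (rule DERIV_F1[OF r])
  have d2: "\<And>t. (F1 has_real_derivative F2 t) (at t)" unfolding F2_def F1_def by (rule DERIV_F2[OF r])
  have bd: "\<bar>F2 t\<bar> \<le> 3 / L" if "\<bar>t\<bar> \<le> max \<alpha> 1 * \<bar>s\<bar>" for t
  proof -
    have "\<bar>F2 t\<bar> \<le> 3 / DD \<rho> (v - t)" unfolding F2_def by (rule F2_bound[OF r])
    also have "\<dots> \<le> 3 / L" using DL[OF that] L by (simp add: frac_le)
    finally show ?thesis .
  qed
  have t1: "\<bar>F (\<alpha> * s) - F 0 - (\<alpha> * s) * F1 0\<bar> \<le> 3 / L * (\<alpha> * s)\<^sup>2"
    by (rule taylor2[OF d1 d2 bd]) (use al in \<open>auto simp: abs_mult intro: mult_right_mono\<close>)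
  have t2: "\<bar>F s - F 0 - s * F1 0\<bar> \<le> 3 / L * s\<^sup>2"
    by (rule taylor2[OF d1 d2 bd]) (use mult_right_mono[of 1 "max \<alpha> 1" "\<bar>s\<bar>"] in \<open>auto\<close>)
  have eq: "F (\<alpha> * s) - \<alpha> * F s - (1 - \<alpha>) * F 0 = (F (\<alpha> * s) - F 0 - (\<alpha> * s) * F1 0) - \<alpha> * (F s - F 0 - s * F1 0)"
    by (simp add: algebra_simps)
  have "\<bar>F (\<alpha> * s) - \<alpha> * F s - (1 - \<alpha>) * F 0\<bar> \<le> 3 / L * (\<alpha> * s)\<^sup>2 + \<alpha> * (3 / L * s\<^sup>2)"
  proof -
    have "\<bar>\<alpha> * (F s - F 0 - s * F1 0)\<bar> = \<alpha> * \<bar>F s - F 0 - s * F1 0\<bar>" using al by (simp add: abs_mult)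
    also have "\<dots> \<le> \<alpha> * (3 / L * s\<^sup>2)" using t2 al by (intro mult_left_mono) auto
    finally show ?thesis unfolding eq
      using t1 abs_triangle_ineq4[of "F (\<alpha> * s) - F 0 - (\<alpha> * s) * F1 0" "\<alpha> * (F s - F 0 - s * F1 0)"] by linarith
  qed
  also have "\<dots> = 3 * (\<alpha>\<^sup>2 + \<alpha>) * s\<^sup>2 / L" using L by (simp add: power2_eq_square field_simps)
  finally show ?thesis unfolding F_def by simp
qed

lemma prod_roots:
  fixes \<rho> :: real and z :: complex and N :: nat
  assumes r: "\<rho> > 0" and N: "N > 0"
  shows "(\<Prod>k<N. z - of_real \<rho> * cis (2 * pi * real k / real N)) = z ^ N - of_real \<rho> ^ N"
proof -
  define c :: complex where "c = of_real \<rho> ^ N"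
  have c0: "c \<noteq> 0" using r by (simp add: c_def)
  define p :: "complex poly" where "p = monom 1 N + [:-c:]"
  have pp: "poly p w = w ^ N - c" for w by (simp add: p_def poly_monom)
  have deg: "degree p = N" unfolding p_def using N by (subst degree_add_eq_left) (auto simp: degree_monom_eq)
  have lc: "lead_coeff p = 1" unfolding deg unfolding p_def using N by (cases N) (auto simp: coeff_monom)
  have pd: "pderiv p = monom (of_nat N) (N - 1)" unfolding p_def by (simp add: pderiv_add pderiv_monom)
  have rs: "rsquarefree p" unfolding rsquarefree_roots
  proof (intro allI notI)
    fix a assume a: "poly p a = 0 \<and> poly (pderiv p) a = 0"
    hence "of_nat N * a ^ (N - 1) = 0" by (simp add: pd poly_monom)
    hence "a = 0" using N by simp
    thus False using a c0 N by (simp add: pp zero_power)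
  qed
  have dec: "smult (lead_coeff p) (\<Prod>w|poly p w = 0. [:-w, 1:]) = p"
    by (rule complex_poly_decompose_rsquarefree[OF rs])
  have "poly p z = (\<Prod>w|poly p w = 0. z - w)"
    by (subst dec[symmetric]) (simp add: lc poly_prod)
  also have "{w. poly p w = 0} = {w. w ^ N = c}" by (simp add: pp)
  also have "(\<Prod>w\<in>{w. w ^ N = c}. z - w) = (\<Prod>k<N. z - of_real \<rho> * cis (2 * pi * real k / real N))"
  proof -
    have b1: "bij_betw (\<lambda>k. cis (2 * pi * real k / real N)) {..<N} {z. z ^ N = 1}"
      by (rule Complex.bij_betw_roots_unity[OF N])
    have b2: "bij_betw (\<lambda>w. of_real \<rho> * w) {z. z ^ N = 1} {w. w ^ N = c}"
      unfolding bij_betw_def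
    proof (intro conjI)
      show "inj_on (\<lambda>w. complex_of_real \<rho> * w) {z. z ^ N = 1}" using r by (auto simp: inj_on_def)
      show "(\<lambda>w. complex_of_real \<rho> * w) ` {z. z ^ N = 1} = {w. w ^ N = c}"
      proof (intro equalityI subsetI)
        fix w assume "w \<in> (\<lambda>w. complex_of_real \<rho> * w) ` {z. z ^ N = 1}"
        thus "w \<in> {w. w ^ N = c}" by (auto simp: c_def power_mult_distrib)
      next
        fix w assume w: "w \<in> {w. w ^ N = c}"
        have "(w / of_real \<rho>) ^ N = 1" using w r by (simp add: c_def power_divide)
        moreover have "w = of_real \<rho> * (w / of_real \<rho>)" using r by simp
        ultimately show "w \<in> (\<lambda>w. complex_of_real \<rho> * w) ` {z. z ^ N = 1}" by blast
      qed
    qed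
    have b: "bij_betw (\<lambda>k. of_real \<rho> * cis (2 * pi * real k / real N)) {..<N} {w. w ^ N = c}"
      using bij_betw_trans[OF b1 b2] by (simp add: o_def)
    show ?thesis by (rule prod.reindex_bij_betw[OF b, symmetric])
  qed
  finally show ?thesis by (simp add: pp c_def)
qed
lemma sin_lower:
  fixes y :: real assumes "\<bar>y\<bar> \<le> 2"
  shows "\<bar>sin y\<bar> \<ge> \<bar>y\<bar> / 3"
proof -
  have s3: "(\<Sum>m<3. sin_coeff m * x ^ m) = (x::real)" for x
    by (simp add: lessThan_nat_numeral sin_coeff_def)
  have f6: "fact 3 = (6::real)" by (simp add: numeral_3_eq_3)
  have f3: "inverse (fact 3) * \<bar>x\<bar> ^ 3 = \<bar>x\<bar> ^ 3 / (6::real)" for x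
    unfolding f6 by (simp add: field_simps)
  have mb: "\<bar>sin x - x\<bar> \<le> \<bar>x\<bar> ^ 3 / 6" for x :: real
    using Maclaurin_sin_bound[of x 3] unfolding s3 f3 .
  have "\<bar>y\<bar> ^ 3 = \<bar>y\<bar> * \<bar>y\<bar>\<^sup>2" by (simp add: power3_eq_cube power2_eq_square)
  also have "\<dots> \<le> \<bar>y\<bar> * 4"
  proof -
    have "\<bar>y\<bar>\<^sup>2 \<le> 2\<^sup>2" using assms by (intro power_mono) auto
    thus ?thesis by (simp add: mult_left_mono)
  qed
  finally have "\<bar>y\<bar> ^ 3 / 6 \<le> 2 * \<bar>y\<bar> / 3" by simp
  with mb[of y] show ?thesis by linarith
qed

lemma G_summable:
  fixes A B c :: real assumes A: "A > 0" and B: "B > 0" and c: "c \<ge> 0"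
  shows "summable (\<lambda>i::nat. 1 / (A + B * (max 0 (real i - c))\<^sup>2))"
proof (rule summable_comparison_test')
  show "summable (\<lambda>n::nat. (4 / B) * inverse (real n ^ 2))"
    by (intro summable_mult inverse_power_summable) simp
  fix n :: nat assume n: "n \<ge> nat \<lceil>2 * c\<rceil> + 1"
  hence n1: "real n \<ge> 2 * c" "real n \<ge> 1" by linarith+
  hence m: "max 0 (real n - c) \<ge> real n / 2" by simp
  have "(real n / 2)\<^sup>2 \<le> (max 0 (real n - c))\<^sup>2" using m n1 by (intro power_mono) auto
  hence le: "B * (real n)\<^sup>2 / 4 \<le> A + B * (max 0 (real n - c))\<^sup>2"
  proof -
    have "B * (real n / 2)\<^sup>2 \<le> B * (max 0 (real n - c))\<^sup>2" using B \<open>(real n / 2)\<^sup>2 \<le> _\<close> by simp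
    thus ?thesis using A by (simp add: power_divide)
  qed
  have pos: "0 < B * (real n)\<^sup>2 / 4" using B n1 by simp
  have "norm (1 / (A + B * (max 0 (real n - c))\<^sup>2)) = 1 / (A + B * (max 0 (real n - c))\<^sup>2)"
    using A B by (simp add: add_pos_nonneg)
  also have "\<dots> \<le> 1 / (B * (real n)\<^sup>2 / 4)" 
    by (rule divide_left_mono[OF le]) (use le pos in \<open>auto intro!: mult_pos_pos\<close>)
  also have "\<dots> = (4 / B) * inverse (real n ^ 2)" by (simp add: field_simps)
  finally show "norm (1 / (A + B * (max 0 (real n - c))\<^sup>2)) \<le> (4 / B) * inverse (real n ^ 2)" .
qed

lemma int_sum_bound:
  fixes G :: "real \<Rightarrow> real" and x :: real and S :: "int set"
  assumes fin: "finite S"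
    and mono: "\<And>a b. 0 \<le> a \<Longrightarrow> a \<le> b \<Longrightarrow> G b \<le> G a"
    and nn: "\<And>w. 0 \<le> w \<Longrightarrow> 0 \<le> G w"
    and sm: "summable (\<lambda>i::nat. G (real i))"
  shows "(\<Sum>m\<in>S. G \<bar>x - of_int m\<bar>) \<le> 2 * (\<Sum>i. G (real i))"
proof -
  define S1 where "S1 = {m\<in>S. x \<le> of_int m}"
  define S2 where "S2 = {m\<in>S. of_int m < x}"
  have split: "(\<Sum>m\<in>S. G \<bar>x - of_int m\<bar>) = (\<Sum>m\<in>S1. G \<bar>x - of_int m\<bar>) + (\<Sum>m\<in>S2. G \<bar>x - of_int m\<bar>)"
  proof -
    have "S = S1 \<union> S2" "S1 \<inter> S2 = {}" by (auto simp: S1_def S2_def)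
    thus ?thesis using fin by (simp add: sum.union_disjoint)
  qed
  have nn': "\<And>i. i \<in> - I \<Longrightarrow> 0 \<le> G (real i)" for I :: "nat set" using nn by simp
  define f1 where "f1 = (\<lambda>m. nat (m - \<lceil>x\<rceil>))"
  have inj1: "inj_on f1 S1"
  proof
    fix a b assume a: "a \<in> S1" and b: "b \<in> S1" and e: "f1 a = f1 b"
    have "\<lceil>x\<rceil> \<le> a" "\<lceil>x\<rceil> \<le> b" using a b by (auto simp: S1_def ceiling_le)
    thus "a = b" using e by (simp add: f1_def)
  qed
  have b1: "(\<Sum>m\<in>S1. G \<bar>x - of_int m\<bar>) \<le> (\<Sum>i. G (real i))"
  proof -
    have "(\<Sum>m\<in>S1. G \<bar>x - of_int m\<bar>) \<le> (\<Sum>m\<in>S1. G (real (f1 m)))"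
    proof (rule sum_mono)
      fix m assume "m \<in> S1"
      hence m: "x \<le> of_int m" "\<lceil>x\<rceil> \<le> m" by (auto simp: S1_def ceiling_le)
      have "real (f1 m) = of_int m - of_int \<lceil>x\<rceil>" using m by (simp add: f1_def)
      moreover have "of_int m - of_int \<lceil>x\<rceil> \<le> \<bar>x - of_int m\<bar>" using m le_of_int_ceiling[of x] by linarith
      ultimately show "G \<bar>x - of_int m\<bar> \<le> G (real (f1 m))" by (intro mono) auto
    qed
    also have "\<dots> = (\<Sum>i\<in>f1 ` S1. G (real i))" by (simp add: sum.reindex[OF inj1])
    also have "\<dots> \<le> (\<Sum>i. G (real i))"
      by (rule sum_le_suminf[OF sm]) (use fin in \<open>auto simp: S1_def nn\<close>)
    finally show ?thesis .
  qed
  define f2 where "f2 = (\<lambda>m. nat (\<lceil>x\<rceil> - 1 - m))"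
  have inj2: "inj_on f2 S2"
  proof
    fix a b assume a: "a \<in> S2" and b: "b \<in> S2" and e: "f2 a = f2 b"
    have "a < \<lceil>x\<rceil>" "b < \<lceil>x\<rceil>" using a b by (auto simp: S2_def less_ceiling_iff)
    thus "a = b" using e by (simp add: f2_def)
  qed
  have b2: "(\<Sum>m\<in>S2. G \<bar>x - of_int m\<bar>) \<le> (\<Sum>i. G (real i))"
  proof -
    have "(\<Sum>m\<in>S2. G \<bar>x - of_int m\<bar>) \<le> (\<Sum>m\<in>S2. G (real (f2 m)))"
    proof (rule sum_mono)
      fix m assume "m \<in> S2"
      hence m: "of_int m < x" by (auto simp: S2_def)
      hence m2: "m \<le> \<lceil>x\<rceil> - 1" by (simp add: less_ceiling_iff[symmetric])
      have "real (f2 m) = of_int \<lceil>x\<rceil> - 1 - of_int m" using m2 by (simp add: f2_def)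
      moreover have "of_int \<lceil>x\<rceil> - 1 - of_int m \<le> \<bar>x - of_int m\<bar>" using m ceiling_correct[of x] by linarith
      ultimately show "G \<bar>x - of_int m\<bar> \<le> G (real (f2 m))" by (intro mono) auto
    qed
    also have "\<dots> = (\<Sum>i\<in>f2 ` S2. G (real i))" by (simp add: sum.reindex[OF inj2])
    also have "\<dots> \<le> (\<Sum>i. G (real i))"
      by (rule sum_le_suminf[OF sm]) (use fin in \<open>auto simp: S2_def nn\<close>)
    finally show ?thesis .
  qed
  show ?thesis using split b1 b2 by linarith
qed
lemma sin_shift_pi: "\<bar>sin (y + of_int k * pi)\<bar> = \<bar>sin y\<bar>"
proof -
  have s: "sin (of_int k * pi) = 0" by (simp add: sin_times_pi_eq_0)
  have "(cos (of_int k * pi))\<^sup>2 = 1" using sin_cos_squared_add[of "of_int k * pi"] s by simp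
  hence c: "\<bar>cos (of_int k * pi)\<bar> = 1" unfolding power2_eq_1_iff by auto
  show ?thesis by (simp add: sin_add s abs_mult c)
qed

lemma sin_lip: "\<bar>sin (y - u) - sin y\<bar> \<le> \<bar>u\<bar>" for y u :: real
proof -
  have "\<bar>(\<lambda>r. sin (y + r)) (- u) - (\<lambda>r. sin (y + r)) 0\<bar> \<le> 1 * \<bar>- u\<bar>"
    by (rule mvt_bound[where f'="\<lambda>r. cos (y + r)"]) (auto intro!: derivative_eq_intros)
  thus ?thesis by simp
qed

lemma D_lower:
  fixes \<rho> N m0 \<beta> t x :: real and m k :: int
  assumes r: "1/2 \<le> \<rho>" "\<rho> < 1" and N: "N > 0" and m0: "0 \<le> m0" "m0 \<le> N * (1 - \<rho>)"
    and b: "\<beta> \<ge> 0" and t: "\<bar>t\<bar> \<le> \<beta> * pi / N"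
    and w: "\<bar>x - of_int m\<bar> \<le> N / 2"
  shows "DD \<rho> (2 * (pi * (x - of_int m) / N + of_int k * pi) - t)
     \<ge> (m0\<^sup>2 + (1/2) * (max 0 (\<bar>x - of_int m\<bar> - 3 * \<beta> / 2))\<^sup>2) / N\<^sup>2"
proof -
  define Y where "Y = pi * (x - of_int m) / N"
  define W where "W = \<bar>x - of_int m\<bar>"
  have Y: "\<bar>Y\<bar> = pi * W / N" using N by (simp add: Y_def W_def abs_mult abs_div)
  have Y2: "\<bar>Y\<bar> \<le> 2"
  proof -
    have "W / N \<le> 1/2" using w N by (simp add: W_def field_simps)
    hence "pi * (W / N) \<le> pi * (1/2)" by (intro mult_left_mono) auto
    hence "pi * W / N \<le> pi / 2" by simp
    thus ?thesis using Y pi_half_less_two by linarith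
  qed
  have hs: "(2 * (Y + of_int k * pi) - t) / 2 = (Y + of_int k * pi) - t / 2" by simp
  have s1: "\<bar>sin ((Y + of_int k * pi) - t / 2)\<bar> \<ge> \<bar>Y\<bar> / 3 - \<bar>t\<bar> / 2"
    using sin_lip[of "Y + of_int k * pi" "t/2"] sin_shift_pi[of Y k] sin_lower[OF Y2]
      abs_triangle_ineq2[of "sin (Y + of_int k * pi)" "sin (Y + of_int k * pi - t/2)"]
      abs_minus_commute[of "sin (Y + of_int k * pi)" "sin (Y + of_int k * pi - t/2)"] by linarith
  have s2: "\<bar>Y\<bar> / 3 - \<bar>t\<bar> / 2 \<ge> (pi / (3 * N)) * (W - 3 * \<beta> / 2)"
  proof -
    have "\<bar>t\<bar> / 2 \<le> \<beta> * pi / N / 2" using t by simp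
    thus ?thesis using Y N by (simp add: field_simps)
  qed
  have sq: "(sin ((Y + of_int k * pi) - t / 2))\<^sup>2 \<ge> (pi / (3 * N))\<^sup>2 * (max 0 (W - 3 * \<beta> / 2))\<^sup>2"
  proof (cases "W - 3 * \<beta> / 2 \<ge> 0")
    case True
    have "(pi / (3 * N)) * (W - 3 * \<beta> / 2) \<ge> 0" using True N by simp
    hence "((pi / (3 * N)) * (W - 3 * \<beta> / 2))\<^sup>2 \<le> (\<bar>sin ((Y + of_int k * pi) - t / 2)\<bar>)\<^sup>2"
      using s1 s2 by (intro power_mono) auto
    thus ?thesis using True by (simp only: power_mult_distrib power2_abs max_absorb2)
  next
    case False thus ?thesis by simp
  qed
  have pi2: "(pi / (3 * N))\<^sup>2 \<ge> (1/4) / N\<^sup>2"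
  proof -
    have "(2 / (3 * N))\<^sup>2 \<le> (pi / (3 * N))\<^sup>2" using N pi_ge_two by (intro power_mono divide_right_mono) auto
    moreover have "(2 / (3 * N))\<^sup>2 \<ge> (1/4) / N\<^sup>2" using N by (simp add: power_divide field_simps)
    ultimately show ?thesis by linarith
  qed
  have r1: "(1 - \<rho>)\<^sup>2 \<ge> m0\<^sup>2 / N\<^sup>2"
  proof -
    have "m0 / N \<le> 1 - \<rho>" using m0 N by (simp add: field_simps)
    hence "(m0 / N)\<^sup>2 \<le> (1 - \<rho>)\<^sup>2" using m0 N by (intro power_mono) auto
    thus ?thesis by (simp add: power_divide)
  qed
  have "DD \<rho> (2 * (Y + of_int k * pi) - t) = (1 - \<rho>)\<^sup>2 + 4 * \<rho> * (sin ((Y + of_int k * pi) - t / 2))\<^sup>2"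
    unfolding DD_eq hs ..
  also have "\<dots> \<ge> (1 - \<rho>)\<^sup>2 + 2 * (sin ((Y + of_int k * pi) - t / 2))\<^sup>2"
    using r by (simp add: mult_right_mono)
  finally have c0: "DD \<rho> (2 * (Y + of_int k * pi) - t) \<ge> (1 - \<rho>)\<^sup>2 + 2 * (sin ((Y + of_int k * pi) - t / 2))\<^sup>2" .
  have "(1/4) / N\<^sup>2 * (max 0 (W - 3 * \<beta> / 2))\<^sup>2 \<le> (pi / (3 * N))\<^sup>2 * (max 0 (W - 3 * \<beta> / 2))\<^sup>2"
    using pi2 by (intro mult_right_mono) auto
  hence "DD \<rho> (2 * (Y + of_int k * pi) - t) \<ge> m0\<^sup>2 / N\<^sup>2 + 2 * ((1/4) / N\<^sup>2 * (max 0 (W - 3 * \<beta> / 2))\<^sup>2)"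
    using c0 r1 sq by linarith
  moreover have "(m0\<^sup>2 + (1/2) * (max 0 (W - 3 * \<beta> / 2))\<^sup>2) / N\<^sup>2 = m0\<^sup>2 / N\<^sup>2 + 2 * ((1/4) / N\<^sup>2 * (max 0 (W - 3 * \<beta> / 2))\<^sup>2)"
    using N by (simp add: field_simps)
  ultimately show ?thesis unfolding Y_def W_def by linarith
qed
lemma cmod_fac:
  "cmod (cis \<phi> - complex_of_real \<rho> * exp (complex_of_real \<psi> * \<i>)) = sqrt (DD \<rho> (\<phi> - \<psi>))"
proof -
  have e: "exp (complex_of_real \<psi> * \<i>) = cis \<psi>" by (simp add: cis_conv_exp mult.commute)
  have "(cmod (cis \<phi> - complex_of_real \<rho> * cis \<psi>))\<^sup>2 = (cos \<phi> - \<rho> * cos \<psi>)\<^sup>2 + (sin \<phi> - \<rho> * sin \<psi>)\<^sup>2"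
    by (simp add: cmod_power2)
  also have "\<dots> = (cos \<phi>)\<^sup>2 + (sin \<phi>)\<^sup>2 + \<rho>\<^sup>2 * ((cos \<psi>)\<^sup>2 + (sin \<psi>)\<^sup>2) - 2 * \<rho> * (cos \<phi> * cos \<psi> + sin \<phi> * sin \<psi>)"
    by algebra
  also have "\<dots> = DD \<rho> (\<phi> - \<psi>)"
  proof -
    have h1: "(cos \<phi>)\<^sup>2 + (sin \<phi>)\<^sup>2 = 1" "(cos \<psi>)\<^sup>2 + (sin \<psi>)\<^sup>2 = 1" by simp_all
    show ?thesis unfolding DD_def cos_diff h1 by simp
  qed
  finally show ?thesis unfolding e by (metis norm_ge_zero real_sqrt_unique)
qed

theorem mainTheorem2:
  fixes \<alpha> \<kappa> :: real and \<delta> :: "nat \<Rightarrow> nat \<Rightarrow> real"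
  assumes "\<alpha> > 0" and "\<kappa> > 0"
    and "\<exists>M < 1/2. \<forall>n j. j \<le> n \<longrightarrow> \<bar>\<delta> n j\<bar> \<le> M"
  shows "\<exists>c C. 0 < c \<and> c \<le> C \<and>
           (\<forall>n z. cmod z = 1 \<longrightarrow> c \<le> Rfun \<alpha> \<kappa> \<delta> n z \<and> Rfun \<alpha> \<kappa> \<delta> n z \<le> C)"
proof -
  note al = assms(1) and ka = assms(2)
  obtain M where M: "M < 1/2" "\<And>n j. j \<le> n \<Longrightarrow> \<bar>\<delta> n j\<bar> \<le> M" using assms(3) by blast
  define m0 where "m0 = min (1/2) \<kappa>"
  have m00: "m0 > 0" using ka by (simp add: m0_def)
  define \<beta> where "\<beta> = max \<alpha> 1"
  have b1: "\<beta> \<ge> 1" by (simp add: \<beta>_def)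
  define G where "G = (\<lambda>w::real. 1 / (m0\<^sup>2 + 1/2 * (max 0 (w - 3 * \<beta> / 2))\<^sup>2))"
  define S where "S = (\<Sum>i. G (real i))"
  define Q where "Q = max (1/2) (exp (- \<kappa>))"
  have Q1: "Q < 1" using ka by (simp add: Q_def)
  define \<Lambda>0 where "\<Lambda>0 = ln 2 - ln (1 - Q)"
  define K0 where "K0 = 3 * (\<alpha>\<^sup>2 + \<alpha>) * pi\<^sup>2 * (2 * S) + \<bar>1 - \<alpha>\<bar> * \<Lambda>0"
  have Gpos: "\<And>w. 0 \<le> G w" unfolding G_def using m00 by (simp add: add_pos_nonneg)
  have Gmono: "\<And>a b. 0 \<le> a \<Longrightarrow> a \<le> b \<Longrightarrow> G b \<le> G a"
  proof -
    fix a b :: real assume "0 \<le> a" "a \<le> b"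
    hence "(max 0 (a - 3 * \<beta> / 2))\<^sup>2 \<le> (max 0 (b - 3 * \<beta> / 2))\<^sup>2" by (intro power_mono) auto
    thus "G b \<le> G a" unfolding G_def using m00
      by (intro divide_left_mono) (auto intro!: mult_pos_pos add_pos_nonneg)
  qed
  have Gsum: "summable (\<lambda>i::nat. G (real i))"
    unfolding G_def by (rule G_summable) (use m00 b1 in auto)
  have key: "\<bar>ln (cmod (Pnod \<kappa> \<alpha> \<delta> n z)) - \<alpha> * ln (cmod (Pnod \<kappa> 1 \<delta> n z))\<bar> \<le> K0
     \<and> cmod (Pnod \<kappa> \<alpha> \<delta> n z) > 0 \<and> cmod (Pnod \<kappa> 1 \<delta> n z) > 0"
    if z1: "cmod z = 1" for n z
  proof -
    define N where "N = real n + 1"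
    define \<rho> where "\<rho> = rho \<kappa> n"
    have N0: "N > 0" by (simp add: N_def)
    have r1: "1/2 \<le> \<rho>" "\<rho> < 1" using ka by (auto simp: \<rho>_def rho_def)
    have rpos: "\<rho> > 0" using r1 by simp
    have m0N: "m0 \<le> N * (1 - \<rho>)"
    proof -
      have "1 - \<rho> = min (1/2) (\<kappa> / N)" by (simp add: \<rho>_def rho_def N_def)
      hence "N * (1 - \<rho>) = min (N/2) \<kappa>" using N0 by (simp add: min_mult_distrib_left)
      moreover have "N / 2 \<ge> 1/2" by (simp add: N_def)
      ultimately show ?thesis by (simp add: m0_def)
    qed
    define \<phi> where "\<phi> = Arg z"
    have zc: "z = cis \<phi>" using rcis_cmod_Arg[of z] z1 by (simp add: \<phi>_def rcis_def)
    define x where "x = N * \<phi> / (2 * pi)"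
    define s where "s = (\<lambda>j. 2 * pi * \<delta> n j / N)"
    define v where "v = (\<lambda>j::nat. \<phi> - 2 * pi * real j / N)"
    define g where "g = (\<lambda>a j. DD \<rho> (v j - a * s j))"
    have gpos: "g a j > 0" for a j
    proof -
      have "g a j \<ge> (1 - \<rho>)\<^sup>2" unfolding g_def by (rule DD_pos) (use r1 in auto)
      moreover have "(1 - \<rho>)\<^sup>2 > 0" using r1 by simp
      ultimately show ?thesis by linarith
    qed
    have fac: "cmod (z - complex_of_real (rho \<kappa> n) *
        exp (complex_of_real (2 * pi * (real j + a * \<delta> n j) / (real n + 1)) * \<i>)) = sqrt (g a j)" for a j
    proof -
      have "\<phi> - 2 * pi * (real j + a * \<delta> n j) / (real n + 1) = v j - a * s j"
        by (simp add: v_def s_def N_def add_divide_distrib ring_distribs)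
      thus ?thesis unfolding zc cmod_fac \<rho>_def[symmetric] g_def by simp
    qed
    have lnP: "ln (cmod (Pnod \<kappa> a \<delta> n z)) = (\<Sum>j=0..n. ln (g a j) / 2)"
      and Ppos: "cmod (Pnod \<kappa> a \<delta> n z) > 0" for a
    proof -
      have e: "cmod (Pnod \<kappa> a \<delta> n z) = (\<Prod>j=0..n. sqrt (g a j))"
        unfolding Pnod_def prod_norm[symmetric] fac ..
      show "cmod (Pnod \<kappa> a \<delta> n z) > 0" unfolding e using gpos by (intro prod_pos) auto
      show "ln (cmod (Pnod \<kappa> a \<delta> n z)) = (\<Sum>j=0..n. ln (g a j) / 2)"
      proof -
        have gne: "g a j \<noteq> 0" "0 \<le> g a j" for j using gpos[of a j] by auto
        show ?thesis unfolding e by (subst ln_prod) (auto simp: ln_sqrt gne)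
      qed
    qed
    have P0: "Pnod \<kappa> 0 \<delta> n z = z ^ Suc n - complex_of_real \<rho> ^ Suc n"
    proof -
      have "Pnod \<kappa> 0 \<delta> n z = (\<Prod>k<Suc n. z - complex_of_real \<rho> * cis (2 * pi * real k / real (Suc n)))"
      proof -
        have ee: "exp (complex_of_real \<psi> * \<i>) = cis \<psi>" for \<psi> by (simp add: cis_conv_exp mult.commute)
        show ?thesis unfolding Pnod_def \<rho>_def ee
          by (simp add: atLeast0AtMost lessThan_Suc_atMost[symmetric] add.commute)
      qed
      also have "\<dots> = z ^ Suc n - complex_of_real \<rho> ^ Suc n" by (rule prod_roots) (use rpos in auto)
      finally show ?thesis .
    qed
    have rN: "\<rho> ^ Suc n \<le> Q"
    proof (cases "\<rho> = 1/2")
      case True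
      have "(1/2::real) ^ Suc n \<le> 1/2" by (simp add: power_le_one)
      hence "\<rho> ^ Suc n \<le> 1/2" by (simp only: True)
      thus ?thesis unfolding Q_def by (rule max.coboundedI1)
    next
      case False
      hence r: "\<rho> = 1 - \<kappa> / N" by (simp add: \<rho>_def rho_def N_def max_def split: if_splits)
      have "\<rho> \<le> exp (- \<kappa> / N)" unfolding r using exp_ge_add_one_self[of "- \<kappa> / N"] by simp
      hence "\<rho> ^ Suc n \<le> exp (- \<kappa> / N) ^ Suc n" using rpos by (intro power_mono) auto
      also have "\<dots> = exp (real (Suc n) * (- \<kappa> / N))" by (rule exp_of_nat_mult[symmetric])
      also have "real (Suc n) * (- \<kappa> / N) = - \<kappa>" using N0 by (simp add: N_def add.commute)
      finally show ?thesis by (simp add: Q_def)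
    qed
    have lnP0: "\<bar>ln (cmod (Pnod \<kappa> 0 \<delta> n z))\<bar> \<le> \<Lambda>0"
    proof -
      have zn: "cmod (z ^ Suc n) = 1" by (simp only: norm_power z1 power_one)
      have rn: "cmod (complex_of_real \<rho> ^ Suc n) = \<rho> ^ Suc n" by (simp only: norm_power norm_of_real abs_of_pos[OF rpos])
      have lo: "1 - Q \<le> cmod (Pnod \<kappa> 0 \<delta> n z)"
        unfolding P0 using norm_triangle_ineq2[of "z ^ Suc n" "complex_of_real \<rho> ^ Suc n"] zn rn rN by linarith
      have hi: "cmod (Pnod \<kappa> 0 \<delta> n z) \<le> 2"
        unfolding P0 using norm_triangle_ineq4[of "z ^ Suc n" "complex_of_real \<rho> ^ Suc n"] zn rn rN Q1 by linarith
      have q0: "1 - Q > 0" using Q1 by simp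
      have cp: "cmod (Pnod \<kappa> 0 \<delta> n z) > 0" using lo q0 by linarith
      have "ln (1 - Q) \<le> ln (cmod (Pnod \<kappa> 0 \<delta> n z))" using lo q0 cp by (subst ln_le_cancel_iff) auto
      moreover have "ln (cmod (Pnod \<kappa> 0 \<delta> n z)) \<le> ln 2" using hi cp by (subst ln_le_cancel_iff) auto
      moreover have "ln (1 - Q) \<le> 0" using q0 by (simp add: Q_def)
      moreover have "ln 2 \<ge> (0::real)" by simp
      ultimately show ?thesis unfolding \<Lambda>0_def by linarith
    qed
    define k where "k = (\<lambda>j::nat. \<lfloor>(x - real j) / N + 1/2\<rfloor>)"
    define mm where "mm = (\<lambda>j::nat. int j + int (Suc n) * k j)"
    have mmr: "real_of_int (mm j) = real j + N * real_of_int (k j)" for j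
      unfolding mm_def N_def by (simp add: algebra_simps)
    have mmN: "\<bar>x - of_int (mm j)\<bar> \<le> N / 2" for j
    proof -
      have f: "of_int (k j) \<le> (x - real j) / N + 1/2" "(x - real j) / N + 1/2 < of_int (k j) + 1"
        unfolding k_def by linarith+
      have "x - of_int (mm j) = N * ((x - real j) / N - of_int (k j))"
        using N0 by (simp add: mmr field_simps)
      moreover have "\<bar>(x - real j) / N - of_int (k j)\<bar> \<le> 1/2" using f by linarith
      ultimately show ?thesis using N0 by (simp add: abs_mult)
    qed
    have vrep: "v j = 2 * (pi * (x - of_int (mm j)) / N + of_int (k j) * pi)" for j
      using N0 by (simp add: v_def x_def mmr field_simps)
    have inj: "inj_on mm {0..n}"
    proof
      fix i j assume i: "i \<in> {0..n}" and j: "j \<in> {0..n}" and e: "mm i = mm j"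
      have "mm i mod int (Suc n) = int i" using i by (simp add: mm_def)
      moreover have "mm j mod int (Suc n) = int j" using j by (simp add: mm_def)
      ultimately show "i = j" using e by simp
    qed
    have Ebd: "\<bar>ln (g \<alpha> j) / 2 - \<alpha> * (ln (g 1 j) / 2) - (1 - \<alpha>) * (ln (g 0 j) / 2)\<bar>
        \<le> 3 * (\<alpha>\<^sup>2 + \<alpha>) * pi\<^sup>2 * G \<bar>x - of_int (mm j)\<bar>" if j: "j \<le> n" for j
    proof -
      define w where "w = \<bar>x - of_int (mm j)\<bar>"
      define L where "L = (m0\<^sup>2 + (1/2) * (max 0 (w - 3 * \<beta> / 2))\<^sup>2) / N\<^sup>2"
      have Lpos: "L > 0" unfolding L_def using m00 N0 by (intro divide_pos_pos add_pos_nonneg) auto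
      have sj: "\<bar>s j\<bar> \<le> pi / N"
      proof -
        have "\<bar>\<delta> n j\<bar> \<le> 1/2" using M j by force
        hence "2 * pi * \<bar>\<delta> n j\<bar> \<le> 2 * pi * (1/2)" by (intro mult_left_mono) auto
        thus ?thesis using N0 by (simp add: s_def abs_mult abs_div divide_right_mono)
      qed
      have DL: "DD \<rho> (v j - t) \<ge> L" if t: "\<bar>t\<bar> \<le> max \<alpha> 1 * \<bar>s j\<bar>" for t
      proof -
        have "max \<alpha> 1 * \<bar>s j\<bar> \<le> \<beta> * (pi / N)" unfolding \<beta>_def
          by (rule mult_left_mono[OF sj]) simp
        hence "\<bar>t\<bar> \<le> \<beta> * (pi / N)" using t by linarith
        hence t': "\<bar>t\<bar> \<le> \<beta> * pi / N" by simp
        show ?thesis unfolding vrep L_def w_def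
          by (rule D_lower[OF r1 N0 less_imp_le[OF m00] m0N _ t' mmN]) (use b1 in auto)
      qed
      have A: "\<bar>ln (DD \<rho> (v j - \<alpha> * s j)) / 2 - \<alpha> * (ln (DD \<rho> (v j - s j)) / 2) - (1 - \<alpha>) * (ln (DD \<rho> (v j - 0)) / 2)\<bar>
         \<le> 3 * (\<alpha>\<^sup>2 + \<alpha>) * (s j)\<^sup>2 / L"
        by (rule E_bound[OF rpos r1(2) al Lpos DL])
      have A': "\<bar>ln (g \<alpha> j) / 2 - \<alpha> * (ln (g 1 j) / 2) - (1 - \<alpha>) * (ln (g 0 j) / 2)\<bar>
         \<le> 3 * (\<alpha>\<^sup>2 + \<alpha>) * (s j)\<^sup>2 / L" using A by (simp add: g_def)
      have B: "(s j)\<^sup>2 / L = (s j)\<^sup>2 * N\<^sup>2 * G w"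
        unfolding L_def G_def using N0 by simp
      have C: "(s j)\<^sup>2 * N\<^sup>2 \<le> pi\<^sup>2"
      proof -
        have "(s j * N)\<^sup>2 \<le> pi\<^sup>2"
        proof -
          have "\<bar>s j * N\<bar> \<le> pi" using sj N0 by (simp add: abs_mult field_simps)
          thus ?thesis using abs_le_square_iff by (metis abs_of_pos pi_gt_zero)
        qed
        thus ?thesis by (simp add: power_mult_distrib)
      qed
      have "3 * (\<alpha>\<^sup>2 + \<alpha>) * (s j)\<^sup>2 / L = 3 * (\<alpha>\<^sup>2 + \<alpha>) * ((s j)\<^sup>2 * N\<^sup>2 * G w)"
        by (simp only: B[symmetric] times_divide_eq_right)
      also have "\<dots> \<le> 3 * (\<alpha>\<^sup>2 + \<alpha>) * (pi\<^sup>2 * G w)"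
        using al Gpos[of w] C by (intro mult_left_mono mult_right_mono) auto
      finally show ?thesis using A' unfolding w_def by (simp add: mult.assoc)
    qed
    have sumG: "(\<Sum>j=0..n. G \<bar>x - of_int (mm j)\<bar>) \<le> 2 * S"
    proof -
      have "(\<Sum>j=0..n. G \<bar>x - of_int (mm j)\<bar>) = (\<Sum>m\<in>mm ` {0..n}. G \<bar>x - of_int m\<bar>)"
        by (simp add: sum.reindex[OF inj])
      also have "\<dots> \<le> 2 * S" unfolding S_def
        by (rule int_sum_bound[OF _ Gmono Gpos Gsum]) auto
      finally show ?thesis .
    qed
    define \<Lambda> where "\<Lambda> = ln (cmod (Pnod \<kappa> \<alpha> \<delta> n z)) - \<alpha> * ln (cmod (Pnod \<kappa> 1 \<delta> n z))"
    have split: "\<Lambda> = (\<Sum>j=0..n. ln (g \<alpha> j) / 2 - \<alpha> * (ln (g 1 j) / 2) - (1 - \<alpha>) * (ln (g 0 j) / 2))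
        + (1 - \<alpha>) * ln (cmod (Pnod \<kappa> 0 \<delta> n z))"
      unfolding \<Lambda>_def lnP by (simp add: sum_subtractf sum_distrib_left)
    have "\<bar>\<Lambda>\<bar> \<le> (\<Sum>j=0..n. \<bar>ln (g \<alpha> j) / 2 - \<alpha> * (ln (g 1 j) / 2) - (1 - \<alpha>) * (ln (g 0 j) / 2)\<bar>)
        + \<bar>1 - \<alpha>\<bar> * \<bar>ln (cmod (Pnod \<kappa> 0 \<delta> n z))\<bar>"
    proof -
      let ?A = "(\<Sum>j=0..n. ln (g \<alpha> j) / 2 - \<alpha> * (ln (g 1 j) / 2) - (1 - \<alpha>) * (ln (g 0 j) / 2))"
      let ?B = "(1 - \<alpha>) * ln (cmod (Pnod \<kappa> 0 \<delta> n z))"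
      have "\<bar>?A + ?B\<bar> \<le> \<bar>?A\<bar> + \<bar>?B\<bar>" by (rule abs_triangle_ineq)
      moreover have "\<bar>?A\<bar> \<le> (\<Sum>j=0..n. \<bar>ln (g \<alpha> j) / 2 - \<alpha> * (ln (g 1 j) / 2) - (1 - \<alpha>) * (ln (g 0 j) / 2)\<bar>)"
        by (rule sum_abs)
      moreover have "\<bar>?B\<bar> = \<bar>1 - \<alpha>\<bar> * \<bar>ln (cmod (Pnod \<kappa> 0 \<delta> n z))\<bar>" by (rule abs_mult)
      ultimately show ?thesis unfolding split by linarith
    qed
    also have "\<dots> \<le> (\<Sum>j=0..n. 3 * (\<alpha>\<^sup>2 + \<alpha>) * pi\<^sup>2 * G \<bar>x - of_int (mm j)\<bar>) + \<bar>1 - \<alpha>\<bar> * \<Lambda>0"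
      using Ebd lnP0 by (intro add_mono sum_mono mult_left_mono) auto
    also have "(\<Sum>j=0..n. 3 * (\<alpha>\<^sup>2 + \<alpha>) * pi\<^sup>2 * G \<bar>x - of_int (mm j)\<bar>)
        = 3 * (\<alpha>\<^sup>2 + \<alpha>) * pi\<^sup>2 * (\<Sum>j=0..n. G \<bar>x - of_int (mm j)\<bar>)" by (simp add: sum_distrib_left)
    also have "\<dots> \<le> 3 * (\<alpha>\<^sup>2 + \<alpha>) * pi\<^sup>2 * (2 * S)" using sumG al by (intro mult_left_mono) auto
    finally have "\<bar>\<Lambda>\<bar> \<le> K0" unfolding K0_def by simp
    thus ?thesis unfolding \<Lambda>_def using Ppos by auto
  qed
  have R: "Rfun \<alpha> \<kappa> \<delta> n z = exp (ln (cmod (Pnod \<kappa> \<alpha> \<delta> n z)) - \<alpha> * ln (cmod (Pnod \<kappa> 1 \<delta> n z)))"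
    if "cmod z = 1" for n z
    using key[OF that] by (simp add: Rfun_def powr_def exp_diff)
  have K0: "K0 \<ge> 0" using conjunct1[OF key[of 1 0, OF norm_one]] by (meson abs_ge_zero order_trans)
  show ?thesis
  proof (intro exI conjI allI impI)
    show "0 < exp (- K0)" by simp
    show "exp (- K0) \<le> exp K0" using K0 by simp
    fix n and z :: complex assume z: "cmod z = 1"
    show "exp (- K0) \<le> Rfun \<alpha> \<kappa> \<delta> n z" unfolding R[OF z] using conjunct1[OF key[of z n, OF z]] by (simp add: abs_le_iff)
    show "Rfun \<alpha> \<kappa> \<delta> n z \<le> exp K0" unfolding R[OF z] using conjunct1[OF key[of z n, OF z]] by (simp add: abs_le_iff)
  qed
qed

end
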